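(* Let $G$ be a torsion-free group, $\mathbb{F}$ a field, $\alpha$ a zero divisor in $\mathbb{F}[G]$ with $|supp(\alpha)|=4$ and $|S_\alpha|=10$, and $\beta$ a mate of $\alpha$. Then one of the following holds: (i) there exist distinct non-trivial $x,y\in G$ and $\alpha'\in\mathbb{F}[G]$ with $supp(\alpha')=\{1,x,x^{-1},y\}$, $\alpha'\beta=0$ and $Z(\alpha,\beta)\cong Z(\alpha',\beta)$; (ii) there exist distinct non-trivial $x,y\in G$ and $\alpha'\in\mathbb{F}[G]$ with $supp(\alpha')=\{1,x,y,xy\}$, $\alpha'\beta=0$ and $Z(\alpha,\beta)\cong Z(\alpha',\beta)$. Furthermore, if $\mathbb{F}=\mathbb{F}_2$, then case (i) occurs.
   Context: $supp(\gamma)=\{x\in G:\gamma_x\ne0\}$; $S_\alpha=\{h^{-1}h':h\ne h',\ h,h'\in supp(\alpha)\}$. A mate of $\alpha$ is a non-zero $\beta$ with $\alpha\beta=0$ of minimal support size among all non-zero $\beta'$ with $\alpha\beta'=0$. For $\gamma\delta=0$, $Z(\gamma,\delta)$ is the multigraph with vertex set $supp(\delta)$ whose edges are the sets $\{(h,h',g,g'),(h',h,g',g)\}$ with $h,h'\in supp(\gamma)$, $g,g'\in supp(\delta)$, $g\ne g'$, $hg=h'g'$, each joining $g$ and $g'$. Isomorphism $\cong$ means a pair of bijections on vertices and on edges preserving adjacency and non-adjacency of vertices and of edges. *)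

theory Defs
  imports "HOL-Algebra.Group"
begin

text \<open>Elements of the group ring F[G] are represented as finitely supported
functions from the carrier of G to the field (zero outside the carrier).\<close>

definition supp :: "('a \<Rightarrow> 'f::zero) \<Rightarrow> 'a set" where
  "supp \<gamma> = {x. \<gamma> x \<noteq> 0}"

definition grp_ring :: "('a, 'b) monoid_scheme \<Rightarrow> ('a \<Rightarrow> 'f::field) set" where
  "grp_ring G = {\<gamma>. supp \<gamma> \<subseteq> carrier G \<and> finite (supp \<gamma>)}"

definition gr_mult :: "('a, 'b) monoid_scheme \<Rightarrow> ('a \<Rightarrow> 'f::field) \<Rightarrow> ('a \<Rightarrow> 'f) \<Rightarrow> 'a \<Rightarrow> 'f" where
  "gr_mult G \<gamma> \<delta> x =
     (\<Sum>h\<in>supp \<gamma>. \<Sum>g\<in>supp \<delta>. if h \<otimes>\<^bsub>G\<^esub> g = x then \<gamma> h * \<delta> g else 0)"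

definition torsion_free :: "('a, 'b) monoid_scheme \<Rightarrow> bool" where
  "torsion_free G \<longleftrightarrow>
     (\<forall>x\<in>carrier G. x \<noteq> \<one>\<^bsub>G\<^esub> \<longrightarrow> (\<forall>n::nat. n > 0 \<longrightarrow> x [^]\<^bsub>G\<^esub> n \<noteq> \<one>\<^bsub>G\<^esub>))"

definition S_set :: "('a, 'b) monoid_scheme \<Rightarrow> ('a \<Rightarrow> 'f::zero) \<Rightarrow> 'a set" where
  "S_set G \<alpha> = {inv\<^bsub>G\<^esub> h \<otimes>\<^bsub>G\<^esub> h' | h h'. h \<noteq> h' \<and> h \<in> supp \<alpha> \<and> h' \<in> supp \<alpha>}"

definition is_mate :: "('a, 'b) monoid_scheme \<Rightarrow> ('a \<Rightarrow> 'f::field) \<Rightarrow> ('a \<Rightarrow> 'f) \<Rightarrow> bool" where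
  "is_mate G \<alpha> \<beta> \<longleftrightarrow>
     \<beta> \<in> grp_ring G \<and> \<beta> \<noteq> (\<lambda>_. 0) \<and> gr_mult G \<alpha> \<beta> = (\<lambda>_. 0) \<and>
     (\<forall>\<beta>'\<in>grp_ring G. \<beta>' \<noteq> (\<lambda>_. 0) \<and> gr_mult G \<alpha> \<beta>' = (\<lambda>_. 0)
          \<longrightarrow> card (supp \<beta>) \<le> card (supp \<beta>'))"

definition Z_verts :: "('a \<Rightarrow> 'f::zero) \<Rightarrow> 'a set" where
  "Z_verts \<delta> = supp \<delta>"

definition Z_edges :: "('a, 'b) monoid_scheme \<Rightarrow> ('a \<Rightarrow> 'f::zero) \<Rightarrow> ('a \<Rightarrow> 'f) \<Rightarrow> ('a \<times> 'a \<times> 'a \<times> 'a) set set" where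
  "Z_edges G \<gamma> \<delta> = {{(h, h', g, g'), (h', h, g', g)} | h h' g g'.
      h \<in> supp \<gamma> \<and> h' \<in> supp \<gamma> \<and> g \<in> supp \<delta> \<and> g' \<in> supp \<delta> \<and> g \<noteq> g' \<and>
      h \<otimes>\<^bsub>G\<^esub> g = h' \<otimes>\<^bsub>G\<^esub> g'}"

definition Z_ends :: "('a \<times> 'a \<times> 'a \<times> 'a) set \<Rightarrow> 'a set" where
  "Z_ends e = {g. \<exists>h h' g'. (h, h', g, g') \<in> e}"

definition Z_adjv :: "('a \<times> 'a \<times> 'a \<times> 'a) set set \<Rightarrow> 'a \<Rightarrow> 'a \<Rightarrow> bool" where
  "Z_adjv E u v \<longleftrightarrow> (\<exists>e\<in>E. u \<in> Z_ends e \<and> v \<in> Z_ends e \<and> u \<noteq> v)"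

definition Z_adje :: "('a \<times> 'a \<times> 'a \<times> 'a) set \<Rightarrow> ('a \<times> 'a \<times> 'a \<times> 'a) set \<Rightarrow> bool" where
  "Z_adje e f \<longleftrightarrow> e \<noteq> f \<and> Z_ends e \<inter> Z_ends f \<noteq> {}"

definition Z_iso :: "('a, 'b) monoid_scheme \<Rightarrow> ('a \<Rightarrow> 'f::zero) \<Rightarrow> ('a \<Rightarrow> 'f) \<Rightarrow>
                     ('a \<Rightarrow> 'f) \<Rightarrow> ('a \<Rightarrow> 'f) \<Rightarrow> bool" where
  "Z_iso G \<gamma> \<delta> \<gamma>' \<delta>' \<longleftrightarrow>
     (\<exists>\<phi> \<psi>. bij_betw \<phi> (Z_verts \<delta>) (Z_verts \<delta>') \<and>
            bij_betw \<psi> (Z_edges G \<gamma> \<delta>) (Z_edges G \<gamma>' \<delta>') \<and>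
            (\<forall>u\<in>Z_verts \<delta>. \<forall>v\<in>Z_verts \<delta>.
               Z_adjv (Z_edges G \<gamma> \<delta>) u v \<longleftrightarrow> Z_adjv (Z_edges G \<gamma>' \<delta>') (\<phi> u) (\<phi> v)) \<and>
            (\<forall>e\<in>Z_edges G \<gamma> \<delta>. \<forall>f\<in>Z_edges G \<gamma> \<delta>.
               Z_adje e f \<longleftrightarrow> Z_adje (\<psi> e) (\<psi> f)))"

end

theory Submission imports Defs begin

context group begin
lemma lc [simp]: "\<lbrakk>a \<in> carrier G; x \<in> carrier G; y \<in> carrier G\<rbrakk> \<Longrightarrow> (a \<otimes> x = a \<otimes> y) = (x = y)"
  by (metis Units_eq Units_l_cancel)
lemma ainv [simp]: "\<lbrakk>a \<in> carrier G; x \<in> carrier G\<rbrakk> \<Longrightarrow> a \<otimes> (inv a \<otimes> x) = x"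
  by (simp add: m_assoc[symmetric])
lemma inva [simp]: "\<lbrakk>a \<in> carrier G; x \<in> carrier G\<rbrakk> \<Longrightarrow> inv a \<otimes> (a \<otimes> x) = x"
  by (simp add: m_assoc[symmetric])
end

lemma supp_car: "\<gamma> \<in> grp_ring G \<Longrightarrow> h \<in> supp \<gamma> \<Longrightarrow> h \<in> carrier G"
  by (auto simp: grp_ring_def)

lemma gr_mult_eq:
  assumes G: "group G" and ga: "\<gamma> \<in> grp_ring G" and de: "\<delta> \<in> grp_ring G" and z: "z \<in> carrier G"
  shows "gr_mult G \<gamma> \<delta> z = (\<Sum>h\<in>supp \<gamma>. \<gamma> h * \<delta> (inv\<^bsub>G\<^esub> h \<otimes>\<^bsub>G\<^esub> z))"
  unfolding gr_mult_def
proof (rule sum.cong[OF refl])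
  fix h assume h: "h \<in> supp \<gamma>"
  have hc: "h \<in> carrier G" using ga h by (auto simp: grp_ring_def)
  have "(\<Sum>g\<in>supp \<delta>. if h \<otimes>\<^bsub>G\<^esub> g = z then \<gamma> h * \<delta> g else 0)
      = (\<Sum>g\<in>supp \<delta>. if g = inv\<^bsub>G\<^esub> h \<otimes>\<^bsub>G\<^esub> z then \<gamma> h * \<delta> g else 0)"
  proof (rule sum.cong[OF refl])
    fix g assume "g \<in> supp \<delta>"
    then have "g \<in> carrier G" using de by (auto simp: grp_ring_def)
    then have "(h \<otimes>\<^bsub>G\<^esub> g = z) = (g = inv\<^bsub>G\<^esub> h \<otimes>\<^bsub>G\<^esub> z)"
      using G hc z by (metis group.inv_solve_left)
    then show "(if h \<otimes>\<^bsub>G\<^esub> g = z then \<gamma> h * \<delta> g else 0) = (if g = inv\<^bsub>G\<^esub> h \<otimes>\<^bsub>G\<^esub> z then \<gamma> h * \<delta> g else 0)"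
      by simp
  qed
  also have "\<dots> = \<gamma> h * \<delta> (inv\<^bsub>G\<^esub> h \<otimes>\<^bsub>G\<^esub> z)"
    using de by (auto simp: sum.delta' grp_ring_def supp_def)
  finally show "(\<Sum>g\<in>supp \<delta>. if h \<otimes>\<^bsub>G\<^esub> g = z then \<gamma> h * \<delta> g else 0) = \<gamma> h * \<delta> (inv\<^bsub>G\<^esub> h \<otimes>\<^bsub>G\<^esub> z)" .
qed

lemma gr_mult_out:
  assumes G: "group G" and ga: "\<gamma> \<in> grp_ring G" and de: "\<delta> \<in> grp_ring G" and z: "z \<notin> carrier G"
  shows "gr_mult G \<gamma> \<delta> z = 0"
  unfolding gr_mult_def
  by (rule sum.neutral, rule ballI, rule sum.neutral) (use G ga de z supp_car group.is_monoid monoid.m_closed in metis)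

lemma Z_ends_map:
  "Z_ends ((\<lambda>(h, h', g, g'). (f h, f' h', g, g')) ` e) = Z_ends e"
  unfolding Z_ends_def by force

lemma (in group) translate:
  fixes \<alpha> \<beta> :: "'a \<Rightarrow> 'f::field"
  assumes al: "\<alpha> \<in> grp_ring G" and be: "\<beta> \<in> grp_ring G"
    and ab: "gr_mult G \<alpha> \<beta> = (\<lambda>_. 0)" and a: "a \<in> carrier G"
  shows "\<exists>\<alpha>'\<in>grp_ring G. supp \<alpha>' = (\<lambda>h. inv\<^bsub>G\<^esub> a \<otimes>\<^bsub>G\<^esub> h) ` supp \<alpha> \<and>
           gr_mult G \<alpha>' \<beta> = (\<lambda>_. 0) \<and> Z_iso G \<alpha> \<beta> \<alpha>' \<beta>"
proof -
  have G: "group G" by (rule is_group)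
  define \<alpha>' where "\<alpha>' = (\<lambda>z. if z \<in> carrier G then \<alpha> (a \<otimes> z) else (0::'f))"
  have sc: "supp \<alpha> \<subseteq> carrier G" and fin: "finite (supp \<alpha>)" using al by (auto simp: grp_ring_def)
  have ia: "inv a \<in> carrier G" using a by simp
  have sup: "supp \<alpha>' = (\<lambda>h. inv a \<otimes> h) ` supp \<alpha>"
  proof
    show "supp \<alpha>' \<subseteq> (\<lambda>h. inv a \<otimes> h) ` supp \<alpha>"
    proof
      fix z assume "z \<in> supp \<alpha>'"
      then have z: "z \<in> carrier G \<and> \<alpha> (a \<otimes> z) \<noteq> 0"
        unfolding \<alpha>'_def supp_def by (simp split: if_splits)
      then have e: "inv a \<otimes> (a \<otimes> z) = z" using a inva by blast
      have "a \<otimes> z \<in> supp \<alpha>" using z by (simp add: supp_def)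
      then show "z \<in> (\<lambda>h. inv a \<otimes> h) ` supp \<alpha>" using e by (rule rev_image_eqI[OF _ sym])
    qed
    show "(\<lambda>h. inv a \<otimes> h) ` supp \<alpha> \<subseteq> supp \<alpha>'"
    proof
      fix z assume "z \<in> (\<lambda>h. inv a \<otimes> h) ` supp \<alpha>"
      then obtain h where h: "h \<in> supp \<alpha>" "z = inv a \<otimes> h" by blast
      then have hc: "h \<in> carrier G" using sc by blast
      then have zc: "z \<in> carrier G" using h ia by simp
      have "a \<otimes> z = h" using h hc a ainv by blast
      then show "z \<in> supp \<alpha>'" using h zc unfolding \<alpha>'_def supp_def by simp
    qed
  qed
  have imc: "(\<lambda>h. inv a \<otimes> h) ` supp \<alpha> \<subseteq> carrier G" using sc ia by auto
  have al': "\<alpha>' \<in> grp_ring G"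
    unfolding grp_ring_def using sup fin imc by simp
  have al'v: "\<alpha>' (inv a \<otimes> h) = \<alpha> h" if "h \<in> carrier G" for h
  proof -
    have "inv a \<otimes> h \<in> carrier G" using that ia by simp
    then show ?thesis using that a ainv unfolding \<alpha>'_def by simp
  qed
  have inj: "inj_on (\<lambda>h. inv a \<otimes> h) (carrier G)"
    unfolding inj_on_def using ia lc by blast
  have inj2: "inj_on (\<lambda>h. inv a \<otimes> h) (supp \<alpha>)" using inj sc by (rule inj_on_subset)
  have prod: "gr_mult G \<alpha>' \<beta> = (\<lambda>_. 0)"
  proof
    fix z show "gr_mult G \<alpha>' \<beta> z = 0"
    proof (cases "z \<in> carrier G")
      case False then show ?thesis using gr_mult_out[OF G al' be] by blast
    next
      case z: True
      have "gr_mult G \<alpha>' \<beta> z = (\<Sum>h\<in>supp \<alpha>'. \<alpha>' h * \<beta> (inv h \<otimes> z))"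
        by (rule gr_mult_eq[OF G al' be z])
      also have "\<dots> = (\<Sum>h\<in>supp \<alpha>. \<alpha>' (inv a \<otimes> h) * \<beta> (inv (inv a \<otimes> h) \<otimes> z))"
        unfolding sup by (rule sum.reindex[OF inj2, unfolded comp_def])
      also have "\<dots> = (\<Sum>h\<in>supp \<alpha>. \<alpha> h * \<beta> (inv h \<otimes> (a \<otimes> z)))"
      proof (rule sum.cong[OF refl])
        fix h assume "h \<in> supp \<alpha>"
        then have h: "h \<in> carrier G" using sc by blast
        then show "\<alpha>' (inv a \<otimes> h) * \<beta> (inv (inv a \<otimes> h) \<otimes> z) = \<alpha> h * \<beta> (inv h \<otimes> (a \<otimes> z))"
          using a z ia by (simp add: al'v inv_mult_group m_assoc)
      qed
      also have "\<dots> = gr_mult G \<alpha> \<beta> (a \<otimes> z)"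
        by (rule gr_mult_eq[OF G al be, symmetric]) (use a z in simp)
      finally show ?thesis using ab by simp
    qed
  qed
  define m where "m = (\<lambda>(h::'a, h'::'a, g::'a, g'::'a). (inv a \<otimes> h, inv a \<otimes> h', g, g'))"
  define m' where "m' = (\<lambda>(h::'a, h'::'a, g::'a, g'::'a). (a \<otimes> h, a \<otimes> h', g, g'))"
  define \<psi> where "\<psi> = (\<lambda>e. m ` e)"
  define \<psi>' where "\<psi>' = (\<lambda>e. m' ` e)"
  let ?E = "Z_edges G \<alpha> \<beta>" and ?E' = "Z_edges G \<alpha>' \<beta>"
  have sb: "supp \<beta> \<subseteq> carrier G" using be by (auto simp: grp_ring_def)
  have sc': "supp \<alpha>' \<subseteq> carrier G" using al' by (auto simp: grp_ring_def)
  have in1: "inv a \<otimes> h \<in> supp \<alpha>'" if "h \<in> supp \<alpha>" for h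
    using that sup by blast
  have in2: "a \<otimes> h \<in> supp \<alpha>" if "h \<in> supp \<alpha>'" for h
  proof -
    from that sup obtain k where "k \<in> supp \<alpha>" "h = inv a \<otimes> k" by blast
    then show ?thesis using sc a by auto
  qed
  have mm: "m' (m t) = t" if "fst t \<in> carrier G" "fst (snd t) \<in> carrier G" for t
    using that a unfolding m_def m'_def by (cases t) auto
  have mm': "m (m' t) = t" if "fst t \<in> carrier G" "fst (snd t) \<in> carrier G" for t
    using that a unfolding m_def m'_def by (cases t) auto
  have ecar: "\<forall>t\<in>e. fst t \<in> carrier G \<and> fst (snd t) \<in> carrier G" if "e \<in> ?E" for e
    using that sc unfolding Z_edges_def by auto
  have ecar': "\<forall>t\<in>e. fst t \<in> carrier G \<and> fst (snd t) \<in> carrier G" if "e \<in> ?E'" for e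
    using that sc' unfolding Z_edges_def by auto
  have bij: "bij_betw \<psi> ?E ?E'"
  proof (rule bij_betw_byWitness[where f' = \<psi>'])
    show "\<forall>e\<in>?E. \<psi>' (\<psi> e) = e"
    proof
      fix e assume "e \<in> ?E"
      then have "\<forall>t\<in>e. m' (m t) = t" using ecar mm by blast
      then show "\<psi>' (\<psi> e) = e" unfolding \<psi>_def \<psi>'_def image_image by simp
    qed
    show "\<forall>e\<in>?E'. \<psi> (\<psi>' e) = e"
    proof
      fix e assume "e \<in> ?E'"
      then have "\<forall>t\<in>e. m (m' t) = t" using ecar' mm' by blast
      then show "\<psi> (\<psi>' e) = e" unfolding \<psi>_def \<psi>'_def image_image by simp
    qed
    show "\<psi> ` ?E \<subseteq> ?E'"
    proof
      fix e' assume "e' \<in> \<psi> ` ?E"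
      then obtain h h' g g' where e: "e' = \<psi> {(h, h', g, g'), (h', h, g', g)}"
        "h \<in> supp \<alpha>" "h' \<in> supp \<alpha>" "g \<in> supp \<beta>" "g' \<in> supp \<beta>" "g \<noteq> g'" "h \<otimes> g = h' \<otimes> g'"
        unfolding Z_edges_def by blast
      then have c: "h \<in> carrier G" "h' \<in> carrier G" "g \<in> carrier G" "g' \<in> carrier G" using sc sb by auto
      have "(inv a \<otimes> h) \<otimes> g = (inv a \<otimes> h') \<otimes> g'" using e c ia by (simp add: m_assoc)
      moreover have "e' = {(inv a \<otimes> h, inv a \<otimes> h', g, g'), (inv a \<otimes> h', inv a \<otimes> h, g', g)}"
        using e(1) by (simp add: \<psi>_def m_def)
      moreover have "inv a \<otimes> h \<in> supp \<alpha>'" "inv a \<otimes> h' \<in> supp \<alpha>'" using e in1 by auto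
      ultimately show "e' \<in> ?E'" unfolding Z_edges_def using e(4-6) by blast
    qed
    show "\<psi>' ` ?E' \<subseteq> ?E"
    proof
      fix e' assume "e' \<in> \<psi>' ` ?E'"
      then obtain h h' g g' where e: "e' = \<psi>' {(h, h', g, g'), (h', h, g', g)}"
        "h \<in> supp \<alpha>'" "h' \<in> supp \<alpha>'" "g \<in> supp \<beta>" "g' \<in> supp \<beta>" "g \<noteq> g'" "h \<otimes> g = h' \<otimes> g'"
        unfolding Z_edges_def by blast
      then have c: "h \<in> carrier G" "h' \<in> carrier G" "g \<in> carrier G" "g' \<in> carrier G" using sc' sb by auto
      have "(a \<otimes> h) \<otimes> g = (a \<otimes> h') \<otimes> g'" using e c a by (simp add: m_assoc)
      moreover have "e' = {(a \<otimes> h, a \<otimes> h', g, g'), (a \<otimes> h', a \<otimes> h, g', g)}"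
        using e(1) by (simp add: \<psi>'_def m'_def)
      moreover have "a \<otimes> h \<in> supp \<alpha>" "a \<otimes> h' \<in> supp \<alpha>" using e in2 by auto
      ultimately show "e' \<in> ?E" unfolding Z_edges_def using e(4-6) by blast
    qed
  qed
  have ends: "Z_ends (\<psi> e) = Z_ends e" for e
    unfolding \<psi>_def m_def by (rule Z_ends_map)
  have imE: "?E' = \<psi> ` ?E" using bij by (simp add: bij_betw_def)
  have injE: "inj_on \<psi> ?E" using bij by (simp add: bij_betw_def)
  have iso: "Z_iso G \<alpha> \<beta> \<alpha>' \<beta>"
    unfolding Z_iso_def
  proof (intro exI conjI ballI)
    show "bij_betw id (Z_verts \<beta>) (Z_verts \<beta>)" by simp
    show "bij_betw \<psi> ?E ?E'" by (rule bij)
    fix u v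
    show "Z_adjv ?E u v = Z_adjv ?E' (id u) (id v)"
      unfolding Z_adjv_def imE using ends by auto
  next
    fix e f assume "e \<in> ?E" "f \<in> ?E"
    then show "Z_adje e f = Z_adje (\<psi> e) (\<psi> f)"
      unfolding Z_adje_def ends using injE by (auto simp: inj_on_def)
  qed
  show ?thesis using al' sup prod iso by blast
qed

lemma four_eq:
  assumes "finite A" "card A = 4" "a \<in> A" "b \<in> A" "c \<in> A" "d \<in> A" "distinct [a,b,c,d]"
  shows "A = {a,b,c,d}"
proof -
  have "card {a,b,c,d} = 4" using assms(7) by simp
  moreover have "{a,b,c,d} \<subseteq> A" using assms by simp
  ultimately show ?thesis using card_subset_eq[OF assms(1)] assms(2) by metis
qed

lemma fourth:
  assumes "finite A" "card A = 4" "a \<in> A" "b \<in> A" "c \<in> A"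
  shows "\<exists>d\<in>A. d \<notin> {a,b,c}"
proof (rule ccontr)
  assume "\<not> ?thesis"
  then have "A \<subseteq> {a,b,c}" by blast
  then have "card A \<le> card {a,b,c}" by (simp add: card_mono)
  also have "\<dots> \<le> 3" by (simp add: card_insert_if)
  finally show False using assms by simp
qed

lemma (in group) tf_sq:
  assumes tf: "torsion_free G" and t: "t \<in> carrier G" "t \<otimes> t = \<one>"
  shows "t = \<one>"
proof (rule ccontr)
  assume "t \<noteq> \<one>"
  then have "t [^] (2::nat) \<noteq> \<one>" using tf t unfolding torsion_free_def
    by (metis zero_less_numeral)
  moreover have "t [^] (2::nat) = t \<otimes> t" using t by (simp add: numeral_2_eq_2 nat_pow_Suc)
  ultimately show False using t by simp
qed

lemma (in group) coinc:
  assumes tf: "torsion_free G" and Ac: "A \<subseteq> carrier G" and A4: "card A = 4"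
    and S: "card {inv h \<otimes> h' | h h'. h \<noteq> h' \<and> h \<in> A \<and> h' \<in> A} = 10"
  shows "\<exists>a b c d. A = {a,b,c,d} \<and> distinct [a,b,c,d] \<and>
           (inv a \<otimes> b = inv c \<otimes> a \<or> inv a \<otimes> b = inv c \<otimes> d)"
proof -
  have fin: "finite A" using A4 by (metis card.infinite zero_neq_numeral)
  define P where "P = A \<times> A - (\<lambda>h. (h, h)) ` A"
  define f where "f = (\<lambda>(h, h'). inv h \<otimes> h')"
  have "card ((\<lambda>h. (h, h)) ` A) = 4" using A4 by (simp add: card_image inj_on_def)
  moreover have "card (A \<times> A) = 16" using A4 by (simp add: card_cartesian_product)
  moreover have "(\<lambda>h. (h, h)) ` A \<subseteq> A \<times> A" by auto
  ultimately have cP: "card P = 12" unfolding P_def using fin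
    by (simp add: card_Diff_subset finite_imageI)
  have SP: "{inv h \<otimes> h' | h h'. h \<noteq> h' \<and> h \<in> A \<and> h' \<in> A} = f ` P"
    unfolding P_def f_def by auto
  have "\<not> inj_on f P"
  proof
    assume "inj_on f P"
    then have "card (f ` P) = 12" using cP by (simp add: card_image)
    then show False using S SP by simp
  qed
  then obtain p q where pq: "p \<in> P" "q \<in> P" "p \<noteq> q" "f p = f q" unfolding inj_on_def by blast
  obtain h1 h2 where p: "p = (h1, h2)" by (cases p)
  obtain h3 h4 where q: "q = (h3, h4)" by (cases q)
  have inA: "h1 \<in> A" "h2 \<in> A" "h3 \<in> A" "h4 \<in> A" "h1 \<noteq> h2" "h3 \<noteq> h4"
    using pq p q unfolding P_def by auto
  have c: "h1 \<in> carrier G" "h2 \<in> carrier G" "h3 \<in> carrier G" "h4 \<in> carrier G"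
    using inA Ac by auto
  have eq: "inv h1 \<otimes> h2 = inv h3 \<otimes> h4" using pq p q unfolding f_def by simp
  have n13: "h1 \<noteq> h3"
  proof
    assume "h1 = h3"
    then have "h2 = h4" using eq c by simp
    then show False using \<open>h1 = h3\<close> pq p q by simp
  qed
  have n24: "h2 \<noteq> h4"
  proof
    assume "h2 = h4"
    then have "inv h1 = inv h3" using eq c by simp
    then have "h1 = h3" using c by (metis inv_inv)
    then show False using n13 by simp
  qed
  have geninv: "inv (inv x \<otimes> y) = inv y \<otimes> x" if "x \<in> carrier G" "y \<in> carrier G" for x y
    using that by (simp add: inv_mult_group)
  have main: "\<exists>a b c. a \<in> A \<and> b \<in> A \<and> c \<in> A \<and> distinct [a,b,c] \<and> inv a \<otimes> b = inv c \<otimes> a"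
    if "h1 = h4 \<or> h2 = h3"
  proof (cases "h1 = h4")
    case True
    have "h2 \<noteq> h3"
    proof
      assume "h2 = h3"
      let ?t = "inv h1 \<otimes> h2"
      have tc: "?t \<in> carrier G" using c by simp
      have "inv ?t = inv h2 \<otimes> h1" using geninv c by blast
      also have "\<dots> = ?t" using eq True \<open>h2 = h3\<close> by simp
      finally have it: "inv ?t = ?t" .
      have "?t \<otimes> inv ?t = \<one>" using tc by (rule r_inv)
      then have "?t \<otimes> ?t = \<one>" unfolding it .
      then have "?t = \<one>" using tf_sq[OF tf tc] by blast
      then have "h2 = h1 \<otimes> \<one>" using inv_solve_left'[of "\<one>" h1 h2] c by simp
      then have "h2 = h1" using c by simp
      then show False using inA by simp
    qed
    then show ?thesis using True eq inA n13 by (intro exI[of _ h1] exI[of _ h2] exI[of _ h3]) auto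
  next
    case False
    then have h23: "h2 = h3" using that by simp
    have "inv h2 \<otimes> h1 = inv (inv h1 \<otimes> h2)" using geninv[of h1 h2] c by simp
    also have "\<dots> = inv (inv h3 \<otimes> h4)" using eq by simp
    also have "\<dots> = inv h4 \<otimes> h2" using geninv[of h3 h4] c h23 by simp
    finally have "inv h2 \<otimes> h1 = inv h4 \<otimes> h2" .
    then show ?thesis using False h23 inA by (intro exI[of _ h2] exI[of _ h1] exI[of _ h4]) auto
  qed
  show ?thesis
  proof (cases "h1 = h4 \<or> h2 = h3")
    case True
    then obtain a b c where abc: "a \<in> A" "b \<in> A" "c \<in> A" "distinct [a,b,c]" "inv a \<otimes> b = inv c \<otimes> a"
      using main by blast
    then obtain d where d: "d \<in> A" "d \<notin> {a,b,c}" using fourth[OF fin A4] by blast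
    have "distinct [a,b,c,d]" using abc d by auto
    then show ?thesis using four_eq[OF fin A4 abc(1-3) d(1)] abc(5) by blast
  next
    case False
    then have "distinct [h1,h2,h3,h4]" using n13 n24 inA by auto
    then show ?thesis using four_eq[OF fin A4 inA(1-4)] eq by blast
  qed
qed

lemma card2_vals:
  assumes "card (UNIV :: 'f::field set) = 2"
  shows "\<forall>v::'f. v = 0 \<or> v = 1"
proof -
  have fin: "finite (UNIV :: 'f set)" using assms card.infinite by fastforce
  have "card {0::'f, 1} = 2" by simp
  then have "{0::'f, 1} = UNIV" using card_subset_eq[OF fin, of "{0,1}"] assms by simp
  then show ?thesis by blast
qed

lemma card2_char:
  assumes "card (UNIV :: 'f::field set) = 2" and "(v::'f) + w = 0"
  shows "w = v"
proof -
  have vals: "\<forall>v::'f. v = 0 \<or> v = 1" by (rule card2_vals[OF assms(1)])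
  have "(1::'f) + 1 \<noteq> 1"
  proof
    assume "(1::'f) + 1 = 1"
    then have "(1::'f) = 0" by (metis add_left_cancel add.right_neutral)
    then show False by simp
  qed
  then have oo: "(1::'f) + 1 = 0" using vals by blast
  show ?thesis using vals[rule_format, of v] vals[rule_format, of w] assms(2) oo by auto
qed

lemma (in group) orbit_zero:
  fixes F :: "'a \<Rightarrow> 'f::zero"
  assumes tf: "torsion_free G" and x: "x \<in> carrier G" "x \<noteq> \<one>"
    and fin: "finite {u. F u \<noteq> 0}" and inv: "\<forall>u\<in>carrier G. F (x \<otimes> u) = F u"
    and u: "u \<in> carrier G"
  shows "F u = 0"
proof (rule ccontr)
  assume nz: "F u \<noteq> 0"
  have pw: "F (x [^] n \<otimes> u) = F u" for n :: nat
  proof (induction n)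
    case 0 then show ?case using u by simp
  next
    case (Suc n)
    have "x [^] Suc n \<otimes> u = x \<otimes> (x [^] n \<otimes> u)" by (simp only: nat_pow_Suc2[OF x(1)] m_assoc[OF x(1) nat_pow_closed[OF x(1)] u])
    then show ?case using Suc inv x u by simp
  qed
  have "inj (\<lambda>n::nat. x [^] n \<otimes> u)"
  proof (rule injI)
    fix n m :: nat assume "x [^] n \<otimes> u = x [^] m \<otimes> u"
    then have e: "x [^] n = x [^] m" using x u by simp
    show "n = m"
    proof (rule ccontr)
      assume "n \<noteq> m"
      then consider "n > m" | "m > n" by linarith
      then show False
      proof cases
        case 1
        have "x [^] (n - m) = \<one>" using pow_eq_div2[OF x(1) e] .
        moreover have "n - m > 0" using 1 by simp
        ultimately show False using tf x unfolding torsion_free_def by blast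
      next
        case 2
        have "x [^] (m - n) = \<one>" using pow_eq_div2[OF x(1) e[symmetric]] .
        moreover have "m - n > 0" using 2 by simp
        ultimately show False using tf x unfolding torsion_free_def by blast
      qed
    qed
  qed
  moreover have "range (\<lambda>n::nat. x [^] n \<otimes> u) \<subseteq> {u. F u \<noteq> 0}" using pw nz by auto
  ultimately have "\<not> finite {u. F u \<noteq> 0}" using infinite_iff_countable_subset by blast
  then show False using fin by blast
qed

lemma (in group) f2_contra:
  fixes \<alpha> \<beta> :: "'a \<Rightarrow> 'f::field"
  assumes tf: "torsion_free G" and two: "card (UNIV :: 'f set) = 2"
    and al: "\<alpha> \<in> grp_ring G" and be: "\<beta> \<in> grp_ring G" and bnz: "\<beta> \<noteq> (\<lambda>_. 0)"
    and ab: "gr_mult G \<alpha> \<beta> = (\<lambda>_. 0)"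
    and sa: "supp \<alpha> = {a,b,c,d}" and dist: "distinct [a,b,c,d]"
    and rel: "inv a \<otimes> b = inv c \<otimes> d"
  shows False
proof -
  have vals: "\<forall>v::'f. v = 0 \<or> v = 1" by (rule card2_vals[OF two])
  have sc: "supp \<alpha> \<subseteq> carrier G" using al by (auto simp: grp_ring_def)
  have c: "a \<in> carrier G" "b \<in> carrier G" "c \<in> carrier G" "d \<in> carrier G" using sc sa by auto
  have one: "\<alpha> h = 1" if "h \<in> supp \<alpha>" for h
    using that vals unfolding supp_def by blast
  have a1: "\<alpha> a = 1" "\<alpha> b = 1" "\<alpha> c = 1" "\<alpha> d = 1" using one sa by auto
  have sb: "supp \<beta> \<subseteq> carrier G" and finb: "finite (supp \<beta>)" using be by (auto simp: grp_ring_def)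
  define t where "t = inv a \<otimes> b"
  have tc: "t \<in> carrier G" using c by (simp add: t_def)
  have bt: "b = a \<otimes> t" using c inv_solve_left'[of t a b] tc by (simp add: t_def)
  have dt: "d = c \<otimes> t" using c inv_solve_left'[of t c d] tc rel by (simp add: t_def)
  have t1: "t \<noteq> \<one>"
  proof
    assume "t = \<one>" then have "b = a" using bt c by simp
    then show False using dist by simp
  qed
  define s where "s = inv c \<otimes> a"
  have scar: "s \<in> carrier G" using c by (simp add: s_def)
  have s1: "s \<noteq> \<one>"
  proof
    assume "s = \<one>" then have "a = c \<otimes> \<one>" using c inv_solve_left'[of "\<one>" c a] by (simp add: s_def)
    then show False using dist c by simp
  qed
  define F where "F = (\<lambda>u. if u \<in> carrier G then \<beta> u + \<beta> (inv t \<otimes> u) else 0)"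
  have sum4: "\<beta> (inv a \<otimes> z) + \<beta> (inv b \<otimes> z) + \<beta> (inv c \<otimes> z) + \<beta> (inv d \<otimes> z) = 0"
    if z: "z \<in> carrier G" for z
  proof -
    have "gr_mult G \<alpha> \<beta> z = (\<Sum>h\<in>supp \<alpha>. \<alpha> h * \<beta> (inv h \<otimes> z))"
      by (rule gr_mult_eq[OF is_group al be z])
    also have "\<dots> = \<beta> (inv a \<otimes> z) + (\<beta> (inv b \<otimes> z) + (\<beta> (inv c \<otimes> z) + \<beta> (inv d \<otimes> z)))"
      unfolding sa using dist a1 by simp
    finally show ?thesis using ab by (simp add: add.assoc)
  qed
  have Feq: "F (inv a \<otimes> z) + F (inv c \<otimes> z) = 0" if z: "z \<in> carrier G" for z
  proof -
    have "inv b \<otimes> z = inv t \<otimes> (inv a \<otimes> z)" using bt c tc z by (simp add: inv_mult_group m_assoc)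
    moreover have "inv d \<otimes> z = inv t \<otimes> (inv c \<otimes> z)" using dt c tc z by (simp add: inv_mult_group m_assoc)
    moreover have "inv a \<otimes> z \<in> carrier G" "inv c \<otimes> z \<in> carrier G" using c z by auto
    ultimately show ?thesis using sum4[OF z] unfolding F_def by (simp add: add.assoc add.left_commute)
  qed
  have Fs: "\<forall>u\<in>carrier G. F (s \<otimes> u) = F u"
  proof
    fix u assume u: "u \<in> carrier G"
    have "inv a \<otimes> (a \<otimes> u) = u" using c u by simp
    moreover have "inv c \<otimes> (a \<otimes> u) = s \<otimes> u" using c u by (simp add: s_def m_assoc)
    ultimately have "F u + F (s \<otimes> u) = 0" using Feq[of "a \<otimes> u"] c u by simp
    then show "F (s \<otimes> u) = F u" by (rule card2_char[OF two])
  qed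
  have finF: "finite {u. F u \<noteq> 0}"
  proof (rule finite_subset)
    show "{u. F u \<noteq> 0} \<subseteq> supp \<beta> \<union> (\<lambda>v. t \<otimes> v) ` supp \<beta>"
    proof
      fix u assume "u \<in> {u. F u \<noteq> 0}"
      then have u: "u \<in> carrier G" "\<beta> u + \<beta> (inv t \<otimes> u) \<noteq> 0" unfolding F_def by (auto split: if_splits)
      show "u \<in> supp \<beta> \<union> (\<lambda>v. t \<otimes> v) ` supp \<beta>"
      proof (cases "\<beta> u = 0")
        case True
        then have "inv t \<otimes> u \<in> supp \<beta>" using u unfolding supp_def by simp
        moreover have "u = t \<otimes> (inv t \<otimes> u)" using u tc by simp
        ultimately show ?thesis by blast
      next
        case False then show ?thesis unfolding supp_def by simp
      qed
    qed
    show "finite (supp \<beta> \<union> (\<lambda>v. t \<otimes> v) ` supp \<beta>)" using finb by simp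
  qed
  have F0: "F u = 0" if "u \<in> carrier G" for u
    using orbit_zero[OF tf scar s1 finF Fs that] .
  have binv: "\<forall>u\<in>carrier G. \<beta> (inv t \<otimes> u) = \<beta> u"
  proof
    fix u assume u: "u \<in> carrier G"
    then have "\<beta> u + \<beta> (inv t \<otimes> u) = 0" using F0[OF u] unfolding F_def by simp
    then show "\<beta> (inv t \<otimes> u) = \<beta> u" by (rule card2_char[OF two])
  qed
  have it: "inv t \<in> carrier G" "inv t \<noteq> \<one>" using tc t1 by (auto simp: inv_eq_1_iff)
  have "\<beta> u = 0" for u
  proof (cases "u \<in> carrier G")
    case True
    show ?thesis using orbit_zero[OF tf it _ binv True] finb unfolding supp_def by blast
  next
    case False then show ?thesis using sb unfolding supp_def by blast
  qed
  then show False using bnz by blast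
qed

theorem mainTheorem13:
  fixes G :: "('a, 'b) monoid_scheme"
    and \<alpha> \<beta> :: "'a \<Rightarrow> 'f::field"
  assumes "group G"
    and "torsion_free G"
    and "\<alpha> \<in> grp_ring G"
    and "card (supp \<alpha>) = 4"
    and "card (S_set G \<alpha>) = 10"
    and "is_mate G \<alpha> \<beta>"
  shows "((\<exists>x\<in>carrier G. \<exists>y\<in>carrier G. \<exists>\<alpha>'\<in>grp_ring G.
             x \<noteq> y \<and> x \<noteq> \<one>\<^bsub>G\<^esub> \<and> y \<noteq> \<one>\<^bsub>G\<^esub> \<and>
             supp \<alpha>' = {\<one>\<^bsub>G\<^esub>, x, inv\<^bsub>G\<^esub> x, y} \<and>
             gr_mult G \<alpha>' \<beta> = (\<lambda>_. 0) \<and> Z_iso G \<alpha> \<beta> \<alpha>' \<beta>)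
         \<or> (\<exists>x\<in>carrier G. \<exists>y\<in>carrier G. \<exists>\<alpha>'\<in>grp_ring G.
             x \<noteq> y \<and> x \<noteq> \<one>\<^bsub>G\<^esub> \<and> y \<noteq> \<one>\<^bsub>G\<^esub> \<and>
             supp \<alpha>' = {\<one>\<^bsub>G\<^esub>, x, y, x \<otimes>\<^bsub>G\<^esub> y} \<and>
             gr_mult G \<alpha>' \<beta> = (\<lambda>_. 0) \<and> Z_iso G \<alpha> \<beta> \<alpha>' \<beta>))
       \<and> (card (UNIV :: 'f set) = 2 \<longrightarrow>
           (\<exists>x\<in>carrier G. \<exists>y\<in>carrier G. \<exists>\<alpha>'\<in>grp_ring G.
             x \<noteq> y \<and> x \<noteq> \<one>\<^bsub>G\<^esub> \<and> y \<noteq> \<one>\<^bsub>G\<^esub> \<and>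
             supp \<alpha>' = {\<one>\<^bsub>G\<^esub>, x, inv\<^bsub>G\<^esub> x, y} \<and>
             gr_mult G \<alpha>' \<beta> = (\<lambda>_. 0) \<and> Z_iso G \<alpha> \<beta> \<alpha>' \<beta>))"
proof -
  note G = assms(1) and tf = assms(2) and al = assms(3)
  interpret group G by (rule G)
  have be: "\<beta> \<in> grp_ring G" and bnz: "\<beta> \<noteq> (\<lambda>_. 0)" and ab: "gr_mult G \<alpha> \<beta> = (\<lambda>_. 0)"
    using assms(6) unfolding is_mate_def by auto
  have sc: "supp \<alpha> \<subseteq> carrier G" using al by (auto simp: grp_ring_def)
  have S: "card {inv\<^bsub>G\<^esub> h \<otimes>\<^bsub>G\<^esub> h' | h h'. h \<noteq> h' \<and> h \<in> supp \<alpha> \<and> h' \<in> supp \<alpha>} = 10"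
    using assms(5) unfolding S_set_def .
  obtain a b c d where abcd: "supp \<alpha> = {a,b,c,d}" "distinct [a,b,c,d]"
    and rel: "inv\<^bsub>G\<^esub> a \<otimes>\<^bsub>G\<^esub> b = inv\<^bsub>G\<^esub> c \<otimes>\<^bsub>G\<^esub> a \<or> inv\<^bsub>G\<^esub> a \<otimes>\<^bsub>G\<^esub> b = inv\<^bsub>G\<^esub> c \<otimes>\<^bsub>G\<^esub> d"
    using coinc[OF tf sc assms(4) S] by blast
  have c: "a \<in> carrier G" "b \<in> carrier G" "c \<in> carrier G" "d \<in> carrier G" using sc abcd by auto
  obtain \<alpha>' where al': "\<alpha>' \<in> grp_ring G" and sup: "supp \<alpha>' = (\<lambda>h. inv\<^bsub>G\<^esub> a \<otimes>\<^bsub>G\<^esub> h) ` supp \<alpha>"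
    and pr: "gr_mult G \<alpha>' \<beta> = (\<lambda>_. 0)" and iso: "Z_iso G \<alpha> \<beta> \<alpha>' \<beta>"
    using translate[OF al be ab c(1)] by blast
  have sup4: "supp \<alpha>' = {\<one>\<^bsub>G\<^esub>, inv\<^bsub>G\<^esub> a \<otimes>\<^bsub>G\<^esub> b, inv\<^bsub>G\<^esub> a \<otimes>\<^bsub>G\<^esub> c, inv\<^bsub>G\<^esub> a \<otimes>\<^bsub>G\<^esub> d}"
    using c unfolding sup abcd by simp
  have ne: "inv\<^bsub>G\<^esub> a \<otimes>\<^bsub>G\<^esub> u \<noteq> inv\<^bsub>G\<^esub> a \<otimes>\<^bsub>G\<^esub> v" if "u \<in> carrier G" "v \<in> carrier G" "u \<noteq> v" for u v
    using that c by simp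
  have ne1: "inv\<^bsub>G\<^esub> a \<otimes>\<^bsub>G\<^esub> u \<noteq> \<one>\<^bsub>G\<^esub>" if "u \<in> carrier G" "u \<noteq> a" for u
    using ne[OF c(1) that(1)] that c by simp
  have cl: "inv\<^bsub>G\<^esub> a \<otimes>\<^bsub>G\<^esub> u \<in> carrier G" if "u \<in> carrier G" for u using that c by simp
  show ?thesis
  proof (cases "inv\<^bsub>G\<^esub> a \<otimes>\<^bsub>G\<^esub> b = inv\<^bsub>G\<^esub> c \<otimes>\<^bsub>G\<^esub> a")
    case True
    let ?x = "inv\<^bsub>G\<^esub> a \<otimes>\<^bsub>G\<^esub> b" and ?y = "inv\<^bsub>G\<^esub> a \<otimes>\<^bsub>G\<^esub> d"
    have "inv\<^bsub>G\<^esub> ?x = inv\<^bsub>G\<^esub> (inv\<^bsub>G\<^esub> c \<otimes>\<^bsub>G\<^esub> a)" using True by simp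
    also have "\<dots> = inv\<^bsub>G\<^esub> a \<otimes>\<^bsub>G\<^esub> c" using c by (simp add: inv_mult_group)
    finally have ix: "inv\<^bsub>G\<^esub> ?x = inv\<^bsub>G\<^esub> a \<otimes>\<^bsub>G\<^esub> c" .
    have s: "supp \<alpha>' = {\<one>\<^bsub>G\<^esub>, ?x, inv\<^bsub>G\<^esub> ?x, ?y}" unfolding ix sup4 ..
    have "?x \<noteq> ?y" "?x \<noteq> \<one>\<^bsub>G\<^esub>" "?y \<noteq> \<one>\<^bsub>G\<^esub>" "?x \<in> carrier G" "?y \<in> carrier G"
      using ne[of b d] ne1[of b] ne1[of d] cl c abcd(2) by auto
    then show ?thesis using s al' pr iso by blast
  next
    case False
    then have rel2: "inv\<^bsub>G\<^esub> a \<otimes>\<^bsub>G\<^esub> b = inv\<^bsub>G\<^esub> c \<otimes>\<^bsub>G\<^esub> d" using rel by blast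
    have n2: "card (UNIV :: 'f set) \<noteq> 2"
    proof
      assume two: "card (UNIV :: 'f set) = 2"
      show False using f2_contra[OF tf two al be bnz ab abcd rel2] .
    qed
    let ?x = "inv\<^bsub>G\<^esub> a \<otimes>\<^bsub>G\<^esub> c" and ?y = "inv\<^bsub>G\<^esub> a \<otimes>\<^bsub>G\<^esub> b"
    have dd: "d = c \<otimes>\<^bsub>G\<^esub> ?y" using c inv_solve_left'[of ?y c d] rel2 by simp
    have "?x \<otimes>\<^bsub>G\<^esub> ?y = inv\<^bsub>G\<^esub> a \<otimes>\<^bsub>G\<^esub> d" using c by (simp add: dd m_assoc)
    then have s: "supp \<alpha>' = {\<one>\<^bsub>G\<^esub>, ?x, ?y, ?x \<otimes>\<^bsub>G\<^esub> ?y}" unfolding sup4 by (simp add: insert_commute)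
    have "?x \<noteq> ?y" "?x \<noteq> \<one>\<^bsub>G\<^esub>" "?y \<noteq> \<one>\<^bsub>G\<^esub>" "?x \<in> carrier G" "?y \<in> carrier G"
      using ne[of c b] ne1[of b] ne1[of c] cl c abcd(2) by auto
    then show ?thesis using s al' pr iso n2 by blast
  qed
qed

end
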